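(* Let $X$ be a real Banach space and $Y$ a closed subspace of $X$. The following are equivalent: (a) $Y$ has property-$(HB)$ in $X$. (b) $Y$ has property-$(U)$ in $X$, and there exists a linear projection $P$ on $X^*$ with range $Y^\perp$ such that $\|P\|=1=\|I-P\|$. (c) $Y^\perp$ is a Chebyshev subspace of $X^*$, and the metric projection $P_{Y^\perp}:X^*\to Y^\perp$ is a linear projection of norm $1$.
   Context: $Y^\perp=\{x^*\in X^*:x^*|_Y=0\}$. $Y$ has property-$(U)$ in $X$ if every $y^*\in Y^*$ has a unique $x^*\in X^*$ with $x^*|_Y=y^*$ and $\|x^*\|=\|y^*\|$. $Y$ has property-$(HB)$ in $X$ if there is a linear projection $P$ on $X^*$ with range $Y^\perp$ and $\|P\|=1$ such that, writing $G=(I-P)(X^* )$, for every $x^*\in X^*$ with decomposition $x^*=y^\#+y^\perp$, $y^\#\in G$, $y^\perp\in Y^\perp$, $y^\perp\neq0$, one has $\|x^*\|>\|y^\#\|$ and $\|x^*\|\ge\|y^\perp\|$. A subspace $V$ of a Banach space $W$ is Chebyshev if every $w\in W$ has exactly one nearest point in $V$; the metric projection $P_V$ sends $w$ to this nearest point. *)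

theory Defs
  imports "HOL-Analysis.Analysis"
begin

text \<open>The dual space X* of a real Banach space X is the type of bounded linear
functionals \<open>'a \<Rightarrow>\<^sub>L real\<close> with the operator norm.\<close>

definition annihilator :: "'a::real_normed_vector set \<Rightarrow> ('a \<Rightarrow>\<^sub>L real) set" where
  "annihilator Y = {f. \<forall>y\<in>Y. blinfun_apply f y = 0}"

text \<open>Elements of Y* (for a subspace Y, given as a set): real functions that are
linear and bounded on Y (values off Y are irrelevant).\<close>

definition in_subspace_dual :: "'a::real_normed_vector set \<Rightarrow> ('a \<Rightarrow> real) \<Rightarrow> bool" where
  "in_subspace_dual Y g \<longleftrightarrow>
     (\<forall>x\<in>Y. \<forall>y\<in>Y. \<forall>a b. g (a *\<^sub>R x + b *\<^sub>R y) = a * g x + b * g y) \<and>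
     (\<exists>K. \<forall>y\<in>Y. \<bar>g y\<bar> \<le> K * norm y)"

definition subspace_dual_norm :: "'a::real_normed_vector set \<Rightarrow> ('a \<Rightarrow> real) \<Rightarrow> real" where
  "subspace_dual_norm Y g = Sup {\<bar>g y\<bar> | y. y \<in> Y \<and> norm y \<le> 1}"

definition property_U :: "'a::real_normed_vector set \<Rightarrow> bool" where
  "property_U Y \<longleftrightarrow>
     (\<forall>g. in_subspace_dual Y g \<longrightarrow>
        (\<exists>!f :: 'a \<Rightarrow>\<^sub>L real. (\<forall>y\<in>Y. blinfun_apply f y = g y) \<and> norm f = subspace_dual_norm Y g))"

definition linear_projection :: "('b::real_vector \<Rightarrow> 'b) \<Rightarrow> bool" where
  "linear_projection P \<longleftrightarrow> linear P \<and> P \<circ> P = P"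

definition has_norm_one :: "('b::real_normed_vector \<Rightarrow> 'b) \<Rightarrow> bool" where
  "has_norm_one P \<longleftrightarrow> bounded_linear P \<and> onorm P = 1"

definition property_HB :: "'a::real_normed_vector set \<Rightarrow> bool" where
  "property_HB Y \<longleftrightarrow>
     (\<exists>P :: ('a \<Rightarrow>\<^sub>L real) \<Rightarrow> ('a \<Rightarrow>\<^sub>L real).
        linear_projection P \<and> range P = annihilator Y \<and> has_norm_one P \<and>
        (\<forall>x yh yp. yh \<in> range (\<lambda>z. z - P z) \<and> yp \<in> annihilator Y \<and> yp \<noteq> 0 \<and> x = yh + yp
             \<longrightarrow> norm x > norm yh \<and> norm x \<ge> norm yp))"

definition chebyshev :: "'b::metric_space set \<Rightarrow> bool" where
  "chebyshev V \<longleftrightarrow> (\<forall>w. \<exists>!v. v \<in> V \<and> (\<forall>u\<in>V. dist w v \<le> dist w u))"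

definition metric_projection :: "'b::metric_space set \<Rightarrow> 'b \<Rightarrow> 'b" where
  "metric_projection V w = (THE v. v \<in> V \<and> (\<forall>u\<in>V. dist w v \<le> dist w u))"

end

theory Submission
  imports Defs
begin

definition ext_ok :: "real \<Rightarrow> ('a::real_normed_vector \<times> real) set \<Rightarrow> bool" where
  "ext_ok K H \<longleftrightarrow> (0,0) \<in> H \<and> (\<forall>x r s. (x,r)\<in>H \<longrightarrow> (x,s)\<in>H \<longrightarrow> r = s) \<and>
     (\<forall>x r y s a b. (x,r)\<in>H \<longrightarrow> (y,s)\<in>H \<longrightarrow> (a *\<^sub>R x + b *\<^sub>R y, a * r + b * s) \<in> H) \<and>
     (\<forall>x r. (x,r)\<in>H \<longrightarrow> r \<le> K * norm x)"

lemma ext_okD: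
  assumes "ext_ok K H"
  shows ext_ok_zero: "(0,0) \<in> H"
    and ext_ok_sv: "\<And>x r s. (x,r)\<in>H \<Longrightarrow> (x,s)\<in>H \<Longrightarrow> r = s"
    and ext_ok_lin: "\<And>x r y s a b. (x,r)\<in>H \<Longrightarrow> (y,s)\<in>H \<Longrightarrow> (a *\<^sub>R x + b *\<^sub>R y, a * r + b * s) \<in> H"
    and ext_ok_bd: "\<And>x r. (x,r)\<in>H \<Longrightarrow> r \<le> K * norm x"
  using assms unfolding ext_ok_def by blast+

lemma ext_ok_chain:
  assumes C: "C \<in> chains {H. ext_ok K H \<and> H0 \<subseteq> H}" and ne: "C \<noteq> {}"
  shows "\<Union>C \<in> {H. ext_ok K H \<and> H0 \<subseteq> H}"
proof -
  have sub: "\<And>H. H \<in> C \<Longrightarrow> ext_ok K H \<and> H0 \<subseteq> H" using C unfolding chains_def by auto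
  have ch: "\<And>A B. A \<in> C \<Longrightarrow> B \<in> C \<Longrightarrow> A \<subseteq> B \<or> B \<subseteq> A"
    using C unfolding chains_def chain_subset_def by auto
  have two: "\<exists>H\<in>C. p \<in> H \<and> q \<in> H" if pq: "p \<in> \<Union>C" "q \<in> \<Union>C" for p q
  proof -
    obtain A where A: "A \<in> C" "p \<in> A" using pq(1) by blast
    obtain B where B: "B \<in> C" "q \<in> B" using pq(2) by blast
    show ?thesis using ch[OF A(1) B(1)] A B by blast
  qed
  from ne obtain H1 where "H1 \<in> C" by auto
  have "ext_ok K (\<Union>C)"
    unfolding ext_ok_def
  proof (intro conjI allI impI)
    show "(0,0) \<in> \<Union>C" using sub[OF \<open>H1 \<in> C\<close>] \<open>H1 \<in> C\<close> unfolding ext_ok_def by auto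
  next
    fix x r s assume "(x,r) \<in> \<Union>C" "(x,s) \<in> \<Union>C"
    then obtain H where "H \<in> C" "(x,r) \<in> H" "(x,s)\<in>H" using two by blast
    then show "r = s" using ext_ok_sv[of K H x r s] sub[of H] by simp
  next
    fix x r y s a b assume "(x,r) \<in> \<Union>C" "(y,s) \<in> \<Union>C"
    then obtain H where "H \<in> C" "(x,r) \<in> H" "(y,s)\<in>H" using two by blast
    then have "(a *\<^sub>R x + b *\<^sub>R y, a * r + b * s) \<in> H" using ext_ok_lin[of K H x r y s a b] sub[of H] by simp
    then show "(a *\<^sub>R x + b *\<^sub>R y, a * r + b * s) \<in> \<Union>C" using \<open>H \<in> C\<close> by blast
  next
    fix x r assume "(x,r) \<in> \<Union>C"
    then obtain H where "H \<in> C" "(x,r) \<in> H" by blast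
    then show "r \<le> K * norm x" using ext_ok_bd[of K H x r] sub[of H] by simp
  qed
  moreover have "H0 \<subseteq> H1" using sub[OF \<open>H1 \<in> C\<close>] by simp
  then have "H0 \<subseteq> \<Union>C" using \<open>H1 \<in> C\<close> by (meson Union_upper subset_trans)
  ultimately show ?thesis by simp
qed

lemma ext_ok_step:
  assumes ok: "ext_ok K M" and K: "K \<ge> 0" and x0: "\<forall>r. (x0, r) \<notin> M"
  shows "\<exists>M'. ext_ok K M' \<and> M \<subseteq> M' \<and> M' \<noteq> M"
proof -
  have z: "(0,0) \<in> M" and sv: "\<And>x r s. (x,r)\<in>M \<Longrightarrow> (x,s)\<in>M \<Longrightarrow> r = s"
    and lin: "\<And>x r y s a b. (x,r)\<in>M \<Longrightarrow> (y,s)\<in>M \<Longrightarrow> (a *\<^sub>R x + b *\<^sub>R y, a * r + b * s) \<in> M"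
    and bd: "\<And>x r. (x,r)\<in>M \<Longrightarrow> r \<le> K * norm x"
    using ext_okD[OF ok] by blast+
  have sc: "(a *\<^sub>R x, a * r) \<in> M" if "(x,r) \<in> M" for a x r
    using lin[OF that z, of a 0] by simp
  have key: "p - K * norm (u - x0) \<le> K * norm (v + x0) - q" if "(u,p)\<in>M" "(v,q)\<in>M" for u p v q
  proof -
    have "(u + v, p + q) \<in> M" using lin[OF that, of 1 1] by simp
    then have "p + q \<le> K * norm (u + v)" by (rule bd)
    also have "norm (u + v) \<le> norm (u - x0) + norm (v + x0)"
      using norm_triangle_ineq[of "u - x0" "v + x0"] by simp
    then have "K * norm (u + v) \<le> K * (norm (u - x0) + norm (v + x0))"
      using K by (simp add: mult_left_mono)
    finally show ?thesis by (simp add: algebra_simps)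
  qed
  define L where "L = {p - K * norm (u - x0) | u p. (u,p) \<in> M}"
  define c where "c = Sup L"
  have Lne: "L \<noteq> {}" using z unfolding L_def by blast
  have Lbd: "bdd_above L" unfolding L_def bdd_above_def
    using key[OF _ z] by (intro exI[of _ "K * norm (0 + x0) - 0"]) auto
  have c1: "p - K * norm (u - x0) \<le> c" if "(u,p)\<in>M" for u p
    unfolding c_def using that Lbd by (intro cSup_upper) (auto simp: L_def)
  have c2: "c \<le> K * norm (v + x0) - q" if "(v,q)\<in>M" for v q
    unfolding c_def using Lne key[OF _ that] by (intro cSup_least) (auto simp: L_def)
  define M' where "M' = {(d + t *\<^sub>R x0, r + t * c) | d r t. (d,r) \<in> M}"
  have sub: "M \<subseteq> M'" unfolding M'_def by force
  have new: "(x0, c) \<in> M'" unfolding M'_def using z by force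
  have ok': "ext_ok K M'"
    unfolding ext_ok_def
  proof (intro conjI allI impI)
    show "(0,0) \<in> M'" using sub z by blast
  next
    fix x r s assume "(x,r) \<in> M'" "(x,s) \<in> M'"
    note a = this
    obtain d1 r1 t1 where h1: "(d1,r1)\<in>M" "x = d1 + t1 *\<^sub>R x0" "r = r1 + t1 * c"
      using a(1) unfolding M'_def by blast
    obtain d2 r2 t2 where h2: "(d2,r2)\<in>M" "x = d2 + t2 *\<^sub>R x0" "s = r2 + t2 * c"
      using a(2) unfolding M'_def by blast
    note h = h1(1) h2(1) h1(2) h2(2) h1(3) h2(3)
    have "t1 = t2"
    proof (rule ccontr)
      assume ne: "t1 \<noteq> t2"
      have "((1/(t1-t2)) *\<^sub>R d2 + (-1/(t1-t2)) *\<^sub>R d1, (1/(t1-t2)) * r2 + (-1/(t1-t2)) * r1) \<in> M"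
        by (rule lin[OF h(2) h(1)])
      moreover have "(1/(t1-t2)) *\<^sub>R d2 + (-1/(t1-t2)) *\<^sub>R d1 = x0"
      proof -
        have "d2 - d1 = (t1 - t2) *\<^sub>R x0" using h(3,4) by (simp add: algebra_simps)
        then have "(1/(t1-t2)) *\<^sub>R (d2 - d1) = x0" using ne by simp
        then show ?thesis by (simp add: algebra_simps)
      qed
      ultimately show False using x0 by auto
    qed
    then have "d1 = d2" using h(3,4) by simp
    then show "r = s" using sv[of d1 r1 r2] h \<open>t1 = t2\<close> by simp
  next
    fix x r y s a b assume "(x,r) \<in> M'" "(y,s) \<in> M'"
    note a = this
    obtain d1 r1 t1 where h1: "(d1,r1)\<in>M" "x = d1 + t1 *\<^sub>R x0" "r = r1 + t1 * c"
      using a(1) unfolding M'_def by blast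
    obtain d2 r2 t2 where h2: "(d2,r2)\<in>M" "y = d2 + t2 *\<^sub>R x0" "s = r2 + t2 * c"
      using a(2) unfolding M'_def by blast
    note h = h1(1) h2(1) h1(2) h2(2) h1(3) h2(3)
    have e1: "a *\<^sub>R x + b *\<^sub>R y = (a *\<^sub>R d1 + b *\<^sub>R d2) + (a*t1 + b*t2) *\<^sub>R x0"
      using h by (simp add: algebra_simps)
    have e2: "a * r + b * s = (a * r1 + b*r2) + (a*t1 + b*t2) * c" using h by (simp add: algebra_simps)
    have m: "(a *\<^sub>R d1 + b *\<^sub>R d2, a * r1 + b * r2) \<in> M" by (rule lin[OF h(1,2)])
    show "(a *\<^sub>R x + b *\<^sub>R y, a * r + b * s) \<in> M'"
      unfolding M'_def e1 e2 using m by blast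
  next
    fix x r assume "(x,r) \<in> M'"
    then obtain d q t where h: "(d,q)\<in>M" "x = d + t *\<^sub>R x0" "r = q + t * c"
      unfolding M'_def by auto
    consider "t = 0" | "t > 0" | "t < 0" by linarith
    then show "r \<le> K * norm x"
    proof cases
      case 1 then show ?thesis using h bd by simp
    next
      case 2
      have "c \<le> K * norm ((1/t) *\<^sub>R d + x0) - (1/t) * q" using c2[OF sc[OF h(1)]] .
      then have "t * c \<le> t * (K * norm ((1/t) *\<^sub>R d + x0) - (1/t) * q)"
        using 2 by (simp add: mult_left_mono)
      also have "t * (K * norm ((1/t) *\<^sub>R d + x0) - (1/t) * q) = K * (t * norm ((1/t) *\<^sub>R d + x0)) - q"
        using 2 by (simp add: algebra_simps)
      also have "t * norm ((1/t) *\<^sub>R d + x0) = norm (t *\<^sub>R ((1/t) *\<^sub>R d + x0))" using 2 by simp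
      also have "t *\<^sub>R ((1/t) *\<^sub>R d + x0) = x" using 2 h(2) by (simp add: algebra_simps)
      finally show ?thesis using h(3) by simp
    next
      case 3
      define s where "s = - t"
      have s: "s > 0" using 3 s_def by simp
      have "(1/s) * q - K * norm ((1/s) *\<^sub>R d - x0) \<le> c" using c1[OF sc[OF h(1)]] .
      then have "s * ((1/s) * q - K * norm ((1/s) *\<^sub>R d - x0)) \<le> s * c"
        using s by (simp add: mult_left_mono)
      moreover have "s * ((1/s) * q - K * norm ((1/s) *\<^sub>R d - x0)) = q - K * (s * norm ((1/s) *\<^sub>R d - x0))"
        using s by (simp add: algebra_simps)
      moreover have "s * norm ((1/s) *\<^sub>R d - x0) = norm (s *\<^sub>R ((1/s) *\<^sub>R d - x0))" using s by simp
      moreover have "s *\<^sub>R ((1/s) *\<^sub>R d - x0) = x" using s h(2) s_def by (simp add: algebra_simps)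
      ultimately have "q - K * norm x \<le> s * c" by simp
      then show ?thesis using h(3) s_def by (simp add: algebra_simps)
    qed
  qed
  have "M' \<noteq> M" using new x0 by blast
  then show ?thesis using ok' sub by blast
qed

lemma hahn_banach_graph:
  fixes H0 :: "('a::real_normed_vector \<times> real) set"
  assumes ok: "ext_ok K H0" and K: "K \<ge> 0"
  shows "\<exists>f :: 'a \<Rightarrow>\<^sub>L real. (\<forall>x r. (x,r) \<in> H0 \<longrightarrow> blinfun_apply f x = r) \<and> norm f \<le> K"
proof -
  let ?A = "{H. ext_ok K H \<and> H0 \<subseteq> H}"
  have "\<forall>C\<in>chains ?A. \<exists>U\<in>?A. \<forall>X\<in>C. X \<subseteq> U"
  proof
    fix C assume C: "C \<in> chains ?A"
    show "\<exists>U\<in>?A. \<forall>X\<in>C. X \<subseteq> U"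
    proof (cases "C = {}")
      case True then show ?thesis using ok by auto
    next
      case False
      have "\<Union>C \<in> ?A" by (rule ext_ok_chain[OF C False])
      moreover have "\<forall>X\<in>C. X \<subseteq> \<Union>C" by (simp add: Union_upper)
      ultimately show ?thesis by (rule bexI[rotated])
    qed
  qed
  from Zorn_Lemma2[OF this] obtain M where M: "M \<in> ?A" and max: "\<forall>X\<in>?A. M \<subseteq> X \<longrightarrow> X = M"
    by blast
  have tot: "\<exists>r. (x,r) \<in> M" for x
  proof (rule ccontr)
    assume "\<nexists>r. (x, r) \<in> M"
    then obtain M' where "ext_ok K M'" "M \<subseteq> M'" "M' \<noteq> M" using ext_ok_step[of K M x] M K by auto
    then show False using max M by blast
  qed
  have z: "(0,0) \<in> M" and sv: "\<And>x r s. (x,r)\<in>M \<Longrightarrow> (x,s)\<in>M \<Longrightarrow> r = s"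
    and lin: "\<And>x r y s a b. (x,r)\<in>M \<Longrightarrow> (y,s)\<in>M \<Longrightarrow> (a *\<^sub>R x + b *\<^sub>R y, a * r + b * s) \<in> M"
    and bd: "\<And>x r. (x,r)\<in>M \<Longrightarrow> r \<le> K * norm x"
    using ext_okD[of K M] M by blast+
  define f where "f x = (THE r. (x,r) \<in> M)" for x
  have fM: "(x, f x) \<in> M" for x
    unfolding f_def using tot[of x] sv by (metis theI)
  have feq: "f x = r" if "(x,r) \<in> M" for x r using sv[OF that fM] by simp
  have lf: "linear f"
  proof
    fix x y show "f (x + y) = f x + f y" using lin[OF fM fM, of 1 x 1 y] feq by simp
  next
    fix a x show "f (a *\<^sub>R x) = a *\<^sub>R f x" using lin[OF fM fM, of a x 0 x] feq by simp
  qed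
  have fb: "norm (f x) \<le> K * norm x" for x
  proof -
    have "f x \<le> K * norm x" using bd[OF fM] .
    moreover have "f (-x) \<le> K * norm (-x)" using bd[OF fM] .
    moreover have "f (-x) = - f x" using linear_neg[OF lf] by simp
    ultimately show ?thesis by simp
  qed
  have bl: "bounded_linear f"
    unfolding bounded_linear_def bounded_linear_axioms_def using lf fb by (auto intro!: exI[of _ K] simp: mult.commute)
  have "norm (Blinfun f) \<le> K"
    proof (rule norm_blinfun_bound[OF K])
      fix x show "norm (blinfun_apply (Blinfun f) x) \<le> K * norm x"
        unfolding bounded_linear_Blinfun_apply[OF bl] by (rule fb)
    qed
  moreover have "\<forall>x r. (x,r) \<in> H0 \<longrightarrow> blinfun_apply (Blinfun f) x = r"
    using M feq by (auto simp: bounded_linear_Blinfun_apply[OF bl])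
  ultimately show ?thesis by blast
qed


lemma isd_zero: "in_subspace_dual Y g \<Longrightarrow> 0 \<in> Y \<Longrightarrow> g 0 = 0"
  unfolding in_subspace_dual_def by (metis mult_zero_left add_0 scaleR_zero_left)

lemma isd_scale: "in_subspace_dual Y g \<Longrightarrow> y \<in> Y \<Longrightarrow> g (a *\<^sub>R y) = a * g y"
  unfolding in_subspace_dual_def by (metis mult_zero_left add_0_right scaleR_zero_left)

lemma isd_lin: "in_subspace_dual Y g \<Longrightarrow> x \<in> Y \<Longrightarrow> y \<in> Y \<Longrightarrow> g (a *\<^sub>R x + b *\<^sub>R y) = a * g x + b * g y"
  unfolding in_subspace_dual_def by blast

lemma isd_blinfun: "in_subspace_dual Y (blinfun_apply f)"
  unfolding in_subspace_dual_def
  by (auto simp: blinfun.add_right blinfun.scaleR_right intro!: exI[of _ "norm f"] norm_blinfun[of f, simplified])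

lemma sdn_props:
  assumes Y: "subspace Y" and g: "in_subspace_dual Y g"
  shows sdn_nonneg: "0 \<le> subspace_dual_norm Y g"
    and sdn_bound: "y \<in> Y \<Longrightarrow> \<bar>g y\<bar> \<le> subspace_dual_norm Y g * norm y"
    and sdn_le: "(\<forall>y\<in>Y. blinfun_apply f y = g y) \<Longrightarrow> subspace_dual_norm Y g \<le> norm f"
proof -
  define S where "S = {\<bar>g y\<bar> | y. y \<in> Y \<and> norm y \<le> 1}"
  have sdn: "subspace_dual_norm Y g = Sup S" unfolding subspace_dual_norm_def S_def ..
  have z: "0 \<in> Y" using Y by (rule subspace_0)
  have g0: "g 0 = 0" by (rule isd_zero[OF g z])
  have zS: "0 \<in> S" unfolding S_def using z g0 by force
  obtain K where K: "\<forall>y\<in>Y. \<bar>g y\<bar> \<le> K * norm y" using g unfolding in_subspace_dual_def by blast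
  have bdd: "bdd_above S" unfolding bdd_above_def S_def
  proof (intro exI[of _ "\<bar>K\<bar>"] ballI, clarify)
    fix y assume "y \<in> Y" "norm y \<le> 1"
    then have "\<bar>g y\<bar> \<le> K * norm y" using K by blast
    also have "K * norm y \<le> \<bar>K\<bar> * norm y" by (simp add: mult_right_mono)
    also have "\<bar>K\<bar> * norm y \<le> \<bar>K\<bar> * 1" using \<open>norm y \<le> 1\<close> by (rule mult_left_mono) simp
    finally show "\<bar>g y\<bar> \<le> \<bar>K\<bar>" by simp
  qed
  show "0 \<le> subspace_dual_norm Y g" unfolding sdn using zS bdd by (rule cSup_upper)
  show "\<bar>g y\<bar> \<le> subspace_dual_norm Y g * norm y" if y: "y \<in> Y"
  proof (cases "y = 0")
    case True then show ?thesis using g0 by simp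
  next
    case False
    have y1: "(1 / norm y) *\<^sub>R y \<in> Y" using Y y by (rule subspace_scale)
    have "norm ((1 / norm y) *\<^sub>R y) \<le> 1" using False by simp
    then have "\<bar>g ((1 / norm y) *\<^sub>R y)\<bar> \<in> S" unfolding S_def using y1 by blast
    then have "\<bar>g ((1 / norm y) *\<^sub>R y)\<bar> \<le> subspace_dual_norm Y g" unfolding sdn using bdd by (rule cSup_upper)
    moreover have "g ((1 / norm y) *\<^sub>R y) = g y / norm y" using isd_scale[OF g y] by simp
    ultimately have "\<bar>g y\<bar> / norm y \<le> subspace_dual_norm Y g" by simp
    then show ?thesis using False by (simp add: divide_le_eq)
  qed
  show "subspace_dual_norm Y g \<le> norm f" if ext: "\<forall>y\<in>Y. blinfun_apply f y = g y"
    unfolding sdn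
  proof (rule cSup_least)
    show "S \<noteq> {}" using zS by blast
  next
    fix v assume "v \<in> S"
    then obtain y where y: "y \<in> Y" "norm y \<le> 1" "v = \<bar>g y\<bar>" unfolding S_def by blast
    have "\<bar>g y\<bar> = norm (blinfun_apply f y)" using ext y by simp
    also have "\<dots> \<le> norm f * norm y" by (rule norm_blinfun)
    also have "\<dots> \<le> norm f * 1" using y(2) by (rule mult_left_mono) simp
    finally show "v \<le> norm f" using y by simp
  qed
qed

lemma hb_extension:
  fixes Y :: "'a::real_normed_vector set"
  assumes Y: "subspace Y" and g: "in_subspace_dual Y g"
  shows "\<exists>f :: 'a \<Rightarrow>\<^sub>L real. (\<forall>y\<in>Y. blinfun_apply f y = g y) \<and> norm f = subspace_dual_norm Y g"
proof -
  define H0 where "H0 = {(y, g y) | y. y \<in> Y}"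
  have ok: "ext_ok (subspace_dual_norm Y g) H0"
    unfolding ext_ok_def H0_def
  proof (intro conjI allI impI)
    show "(0, 0) \<in> {(y, g y) |y. y \<in> Y}" using subspace_0[OF Y] isd_zero[OF g] by force
  next
    fix x r s assume "(x, r) \<in> {(y, g y) |y. y \<in> Y}" "(x, s) \<in> {(y, g y) |y. y \<in> Y}"
    then show "r = s" by auto
  next
    fix x r y s a b assume "(x, r) \<in> {(y, g y) |y. y \<in> Y}" "(y, s) \<in> {(y, g y) |y. y \<in> Y}"
    then have h: "x \<in> Y" "y \<in> Y" "r = g x" "s = g y" by auto
    have "a *\<^sub>R x + b *\<^sub>R y \<in> Y" using h Y by (simp add: subspace_add subspace_scale)
    moreover have "g (a *\<^sub>R x + b *\<^sub>R y) = a * r + b * s" using isd_lin[OF g h(1,2)] h by simp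
    ultimately show "(a *\<^sub>R x + b *\<^sub>R y, a * r + b * s) \<in> {(y, g y) |y. y \<in> Y}" by force
  next
    fix x r assume "(x, r) \<in> {(y, g y) |y. y \<in> Y}"
    then have h: "x \<in> Y" "r = g x" by auto
    show "r \<le> subspace_dual_norm Y g * norm x" using sdn_bound[OF Y g h(1)] h(2) by simp
  qed
  obtain f :: "'a \<Rightarrow>\<^sub>L real" where f: "\<forall>x r. (x,r) \<in> H0 \<longrightarrow> blinfun_apply f x = r"
    "norm f \<le> subspace_dual_norm Y g"
    using hahn_banach_graph[OF ok sdn_nonneg[OF Y g]] by blast
  have ext: "\<forall>y\<in>Y. blinfun_apply f y = g y" using f(1) unfolding H0_def by blast
  show ?thesis using ext f(2) sdn_le[OF Y g ext] by (intro exI[of _ f]) simp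
qed

lemma nonzero_functional:
  fixes y0 :: "'a::real_normed_vector"
  assumes "y0 \<noteq> 0"
  shows "\<exists>f :: 'a \<Rightarrow>\<^sub>L real. blinfun_apply f y0 \<noteq> 0"
proof -
  define H0 where "H0 = {(t *\<^sub>R y0, t * norm y0) | t. True}"
  have ok: "ext_ok 1 H0"
    unfolding ext_ok_def H0_def
  proof (intro conjI allI impI)
    show "(0, 0) \<in> {(t *\<^sub>R y0, t * norm y0) | t. True}" by (auto intro!: exI[of _ 0])
  next
    fix x r s assume a: "(x, r) \<in> {(t *\<^sub>R y0, t * norm y0) | t. True}" "(x, s) \<in> {(t *\<^sub>R y0, t * norm y0) | t. True}"
    obtain t1 where h1: "x = t1 *\<^sub>R y0" "r = t1 * norm y0" using a(1) by blast
    obtain t2 where h2: "x = t2 *\<^sub>R y0" "s = t2 * norm y0" using a(2) by blast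
    have "t1 = t2" using h1(1) h2(1) assms by (metis scaleR_cancel_right)
    then show "r = s" using h1 h2 by simp
  next
    fix x r y s a b assume "(x, r) \<in> {(t *\<^sub>R y0, t * norm y0) | t. True}" "(y, s) \<in> {(t *\<^sub>R y0, t * norm y0) | t. True}"
    note a = this
    obtain t1 where h1: "x = t1 *\<^sub>R y0" "r = t1 * norm y0" using a(1) by blast
    obtain t2 where h2: "y = t2 *\<^sub>R y0" "s = t2 * norm y0" using a(2) by blast
    note h = h1 h2
    have "a *\<^sub>R x + b *\<^sub>R y = (a * t1 + b * t2) *\<^sub>R y0" "a * r + b * s = (a * t1 + b * t2) * norm y0"
      using h by (simp_all add: algebra_simps)
    then show "(a *\<^sub>R x + b *\<^sub>R y, a * r + b * s) \<in> {(t *\<^sub>R y0, t * norm y0) | t. True}" by auto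
  next
    fix x r assume "(x, r) \<in> {(t *\<^sub>R y0, t * norm y0) | t. True}"
    then obtain t where h: "x = t *\<^sub>R y0" "r = t * norm y0" by auto
    have "t * norm y0 \<le> \<bar>t\<bar> * norm y0" by (simp add: mult_right_mono)
    then show "r \<le> 1 * norm x" using h by simp
  qed
  obtain f :: "'a \<Rightarrow>\<^sub>L real" where f: "\<forall>x r. (x,r) \<in> H0 \<longrightarrow> blinfun_apply f x = r"
    using hahn_banach_graph[OF ok] by auto
  have "(1 *\<^sub>R y0, 1 * norm y0) \<in> H0" unfolding H0_def by blast
  then have "blinfun_apply f y0 = norm y0" using f by simp
  then show ?thesis using assms by (intro exI[of _ f]) simp
qed



lemma ann_diff: "f \<in> annihilator Y \<Longrightarrow> g \<in> annihilator Y \<Longrightarrow> f - g \<in> annihilator Y"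
  unfolding annihilator_def by (simp add: blinfun.diff_left)

lemma ann_agree: "f - g \<in> annihilator Y \<longleftrightarrow> (\<forall>y\<in>Y. blinfun_apply f y = blinfun_apply g y)"
  unfolding annihilator_def by (simp add: blinfun.diff_left)

lemma proj_decomp:
  assumes lp: "linear_projection P" and rg: "range P = A"
    and yh: "yh \<in> range (\<lambda>z. z - P z)" and yp: "yp \<in> A" and x: "x = yh + yp"
  shows "P x = yp" "yh = x - P x"
proof -
  have lin: "linear P" and idem: "\<And>z. P (P z) = P z" using lp unfolding linear_projection_def
    by (auto simp: fun_eq_iff o_def dest: fun_cong)
  obtain z where z: "yh = z - P z" using yh by auto
  have "P yh = 0" using z lin idem by (simp add: linear_diff)
  moreover obtain w where "yp = P w" using yp rg by auto
  then have "P yp = yp" using idem by simp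
  ultimately show "P x = yp" using x lin by (simp add: linear_add)
  then show "yh = x - P x" using x by simp
qed

lemma lp_fix: "linear_projection P \<Longrightarrow> v \<in> range P \<Longrightarrow> P v = v"
  unfolding linear_projection_def by (auto simp: fun_eq_iff)

lemma hn_le: "has_norm_one P \<Longrightarrow> norm (P x) \<le> norm x"
  unfolding has_norm_one_def using onorm[of P x] by simp

lemma uniq2: "\<exists>!x. Q x \<Longrightarrow> Q a \<Longrightarrow> Q b \<Longrightarrow> a = b" by blast

lemma HB_imp_C:
  fixes Y :: "'a::real_normed_vector set"
  assumes "property_HB Y"
  shows "chebyshev (annihilator Y) \<and> linear_projection (metric_projection (annihilator Y)) \<and>
         has_norm_one (metric_projection (annihilator Y))"
proof -
  obtain P where lp: "linear_projection P" and rg: "range P = annihilator Y" and hn: "has_norm_one P"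
    and hb: "\<And>x yh yp. yh \<in> range (\<lambda>z. z - P z) \<Longrightarrow> yp \<in> annihilator Y \<Longrightarrow> yp \<noteq> 0 \<Longrightarrow> x = yh + yp
             \<Longrightarrow> norm x > norm yh \<and> norm x \<ge> norm yp"
    using assms unfolding property_HB_def by blast
  have PA: "P x \<in> annihilator Y" for x using rg by blast
  have strict: "dist x (P x) < dist x u" if u: "u \<in> annihilator Y" "u \<noteq> P x" for x u
  proof -
    have "norm (x - u) > norm (x - P x)"
      using hb[of "x - P x" "P x - u" "x - u"] ann_diff[OF PA u(1)] u(2) by auto
    then show ?thesis by (simp add: dist_norm)
  qed
  have near: "P x \<in> annihilator Y \<and> (\<forall>u\<in>annihilator Y. dist x (P x) \<le> dist x u)" for x
    using PA strict by (metis order_refl less_imp_le)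
  have uniq: "v = P x" if "v \<in> annihilator Y \<and> (\<forall>u\<in>annihilator Y. dist x v \<le> dist x u)" for x v
    using that strict[of v x] PA[of x] by force
  have ch: "chebyshev (annihilator Y)" unfolding chebyshev_def using near uniq by blast
  have "metric_projection (annihilator Y) x = P x" for x
    unfolding metric_projection_def using near uniq by (intro the_equality) blast+
  then have "metric_projection (annihilator Y) = P" by auto
  then show ?thesis using ch lp hn by simp
qed

lemma C_imp_HB:
  fixes Y :: "'a::real_normed_vector set"
  assumes ch: "chebyshev (annihilator Y)" and lp: "linear_projection (metric_projection (annihilator Y))"
    and hn: "has_norm_one (metric_projection (annihilator Y))"
  shows "property_HB Y"
proof -
  define A where "A = annihilator Y"
  define Q where "Q = metric_projection A"
  have ex: "\<exists>!v. v \<in> A \<and> (\<forall>u\<in>A. dist w v \<le> dist w u)" for w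
    using ch unfolding chebyshev_def A_def by blast
  have near: "Q w \<in> A \<and> (\<forall>u\<in>A. dist w (Q w) \<le> dist w u)" for w
    unfolding Q_def metric_projection_def by (rule theI'[OF ex])
  have uniq: "v = Q w" if "v \<in> A \<and> (\<forall>u\<in>A. dist w v \<le> dist w u)" for w v
    by (rule uniq2[OF ex that near])
  have zA: "0 \<in> A" unfolding A_def annihilator_def by simp
  have rg: "range Q = A"
  proof
    show "range Q \<subseteq> A" using near by blast
    show "A \<subseteq> range Q"
    proof
      fix v assume v: "v \<in> A"
      have "v = Q v" using v by (intro uniq) simp
      then show "v \<in> range Q" by (metis rangeI)
    qed
  qed
  have lpQ: "linear_projection Q" and hnQ: "has_norm_one Q" using lp hn unfolding Q_def A_def by auto
  have "\<forall>x yh yp. yh \<in> range (\<lambda>z. z - Q z) \<and> yp \<in> A \<and> yp \<noteq> 0 \<and> x = yh + yp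
             \<longrightarrow> norm x > norm yh \<and> norm x \<ge> norm yp"
  proof (intro allI impI)
    fix x yh yp assume h: "yh \<in> range (\<lambda>z. z - Q z) \<and> yp \<in> A \<and> yp \<noteq> 0 \<and> x = yh + yp"
    have Qx: "Q x = yp" and yhx: "yh = x - Q x" using proj_decomp[OF lpQ rg] h by blast+
    have "norm yp \<le> norm x" using hn_le[OF hnQ, of x] Qx by simp
    moreover have "norm yh < norm x"
    proof -
      have le: "norm yh \<le> norm x" using near[of x] zA yhx by (force simp: dist_norm)
      have "norm yh \<noteq> norm x"
      proof
        assume eq: "norm yh = norm x"
        have "0 \<in> A \<and> (\<forall>u\<in>A. dist x 0 \<le> dist x u)"
          using zA near[of x] eq yhx by (simp add: dist_norm)
        then have "0 = Q x" by (rule uniq)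
        then show False using Qx h by simp
      qed
      then show ?thesis using le by simp
    qed
    ultimately show "norm x > norm yh \<and> norm x \<ge> norm yp" by simp
  qed
  then show ?thesis unfolding property_HB_def using lpQ rg hnQ unfolding A_def by blast
qed

lemma HB_imp_B:
  fixes Y :: "'a::real_normed_vector set"
  assumes Y: "subspace Y" and Y0: "Y \<noteq> {0}" and hbY: "property_HB Y"
  shows "property_U Y \<and>
            (\<exists>P :: ('a \<Rightarrow>\<^sub>L real) \<Rightarrow> ('a \<Rightarrow>\<^sub>L real).
               linear_projection P \<and> range P = annihilator Y \<and>
               has_norm_one P \<and> has_norm_one (\<lambda>z. z - P z))"
proof -
  obtain P where lp: "linear_projection P" and rg: "range P = annihilator Y" and hn: "has_norm_one P"
    and hb: "\<And>x yh yp. yh \<in> range (\<lambda>z. z - P z) \<Longrightarrow> yp \<in> annihilator Y \<Longrightarrow> yp \<noteq> 0 \<Longrightarrow> x = yh + yp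
             \<Longrightarrow> norm x > norm yh \<and> norm x \<ge> norm yp"
    using hbY unfolding property_HB_def by blast
  have lin: "linear P" using lp unfolding linear_projection_def by simp
  have PA: "P x \<in> annihilator Y" for x using rg by blast
  have Pfix: "P v = v" if "v \<in> annihilator Y" for v using lp_fix[OF lp] that rg by simp
  have PP: "P (P x) = P x" for x using Pfix PA by simp
  have Pmin: "P (x - P x) = 0" for x using lin PP by (simp add: linear_diff)
  have dec: "norm (z - P z) < norm z" if "P z \<noteq> 0" for z
    using hb[of "z - P z" "P z" z] PA that by auto
  have U: "property_U Y"
    unfolding property_U_def
  proof (intro allI impI ex_ex1I)
    fix g assume g: "in_subspace_dual Y g"
    show "\<exists>f. (\<forall>y\<in>Y. blinfun_apply f y = g y) \<and> norm f = subspace_dual_norm Y g"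
      by (rule hb_extension[OF Y g])
    have P0: "P f = 0" if f: "(\<forall>y\<in>Y. blinfun_apply f y = g y) \<and> norm f = subspace_dual_norm Y g" for f
    proof (rule ccontr)
      assume "P f \<noteq> 0"
      then have "norm (f - P f) < norm f" by (rule dec)
      moreover have "\<forall>y\<in>Y. blinfun_apply (f - P f) y = g y"
        using f PA[of f] by (auto simp: annihilator_def blinfun.diff_left)
      then have "subspace_dual_norm Y g \<le> norm (f - P f)" by (rule sdn_le[OF Y g])
      ultimately show False using f by simp
    qed
    fix f1 f2 assume f1: "(\<forall>y\<in>Y. blinfun_apply f1 y = g y) \<and> norm f1 = subspace_dual_norm Y g"
      and f2: "(\<forall>y\<in>Y. blinfun_apply f2 y = g y) \<and> norm f2 = subspace_dual_norm Y g"
    have "f1 - f2 \<in> annihilator Y" using f1 f2 by (simp add: ann_agree)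
    then have "P (f1 - f2) = f1 - f2" by (rule Pfix)
    moreover have "P (f1 - f2) = 0" using P0[OF f1] P0[OF f2] lin by (simp add: linear_diff)
    ultimately show "f1 = f2" by simp
  qed
  have bl: "bounded_linear P" using hn unfolding has_norm_one_def by simp
  have blIP: "bounded_linear (\<lambda>z. z - P z)" using bounded_linear_sub[OF bounded_linear_ident bl] by simp
  have le1: "onorm (\<lambda>z. z - P z) \<le> 1"
  proof (rule onorm_bound)
    fix z show "norm (z - P z) \<le> 1 * norm z"
      using dec[of z] by (cases "P z = 0") auto
  qed simp
  obtain y0 where y0: "y0 \<in> Y" "y0 \<noteq> 0" using Y0 subspace_0[OF Y] by blast
  obtain f :: "'a \<Rightarrow>\<^sub>L real" where f: "blinfun_apply f y0 \<noteq> 0" using nonzero_functional[OF y0(2)] by blast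
  have fA: "f \<notin> annihilator Y" using f y0 unfolding annihilator_def by auto
  define w where "w = f - P f"
  have w0: "w \<noteq> 0" using fA PA[of f] unfolding w_def by auto
  have "norm (w - P w) = norm w" using Pmin[of f] unfolding w_def by simp
  then have "norm w \<le> onorm (\<lambda>z. z - P z) * norm w" using onorm[OF blIP, of w] by simp
  then have "1 \<le> onorm (\<lambda>z. z - P z)" using w0 by simp
  then have "has_norm_one (\<lambda>z. z - P z)" using le1 blIP unfolding has_norm_one_def by simp
  then show ?thesis using U lp rg hn by blast
qed

lemma B_imp_HB:
  fixes Y :: "'a::real_normed_vector set"
  assumes Y: "subspace Y" and U: "property_U Y"
    and lp: "linear_projection P" and rg: "range P = annihilator Y"
    and hn: "has_norm_one P" and hn2: "has_norm_one (\<lambda>z. z - P z)"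
  shows "property_HB Y"
proof -
  have lin: "linear P" using lp unfolding linear_projection_def by simp
  have PA: "P x \<in> annihilator Y" for x using rg by blast
  have Pfix: "P v = v" if "v \<in> annihilator Y" for v using lp_fix[OF lp] that rg by simp
  have "\<forall>x yh yp. yh \<in> range (\<lambda>z. z - P z) \<and> yp \<in> annihilator Y \<and> yp \<noteq> 0 \<and> x = yh + yp
             \<longrightarrow> norm x > norm yh \<and> norm x \<ge> norm yp"
  proof (intro allI impI)
    fix x yh yp assume h: "yh \<in> range (\<lambda>z. z - P z) \<and> yp \<in> annihilator Y \<and> yp \<noteq> 0 \<and> x = yh + yp"
    have Px: "P x = yp" and yhx: "yh = x - P x" using proj_decomp[OF lp rg] h by blast+
    have "norm yp \<le> norm x" using hn_le[OF hn, of x] Px by simp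
    moreover have le: "norm yh \<le> norm x" using hn_le[OF hn2, of x] yhx by simp
    moreover have "norm yh \<noteq> norm x"
    proof
      assume eq: "norm yh = norm x"
      define g where "g = blinfun_apply x"
      have g: "in_subspace_dual Y g" unfolding g_def by (rule isd_blinfun)
      obtain hh where hh: "(\<forall>y\<in>Y. blinfun_apply hh y = g y) \<and> norm hh = subspace_dual_norm Y g"
        using U g unfolding property_U_def by blast
      have "hh - x \<in> annihilator Y" using hh by (simp add: ann_agree g_def)
      then have "P (hh - x) = hh - x" by (rule Pfix)
      then have "hh - P hh = x - P x" using lin by (simp add: linear_diff algebra_simps)
      then have "norm yh \<le> norm hh" using hn_le[OF hn2, of hh] yhx by simp
      then have n1: "norm x \<le> subspace_dual_norm Y g" using eq hh by simp
      have n2: "subspace_dual_norm Y g \<le> norm x" by (rule sdn_le[OF Y g]) (simp add: g_def)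
      have xe: "(\<forall>y\<in>Y. blinfun_apply x y = g y) \<and> norm x = subspace_dual_norm Y g"
        using n1 n2 by (simp add: g_def)
      have "x - yh \<in> annihilator Y" using PA[of x] yhx by simp
      then have "(\<forall>y\<in>Y. blinfun_apply yh y = g y)" unfolding ann_agree g_def by auto
      then have ye: "(\<forall>y\<in>Y. blinfun_apply yh y = g y) \<and> norm yh = subspace_dual_norm Y g"
        using eq xe by simp
      have ex1: "\<exists>!f :: 'a \<Rightarrow>\<^sub>L real. (\<forall>y\<in>Y. blinfun_apply f y = g y) \<and> norm f = subspace_dual_norm Y g"
        using U g unfolding property_U_def by blast
      have "x = yh" by (rule uniq2[OF ex1 xe ye])
      then show False using h by simp
    qed
    ultimately show "norm x > norm yh \<and> norm x \<ge> norm yp" by simp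
  qed
  note * = this
  show ?thesis unfolding property_HB_def by (intro exI[of _ P] conjI lp rg hn *)
qed


theorem theorem3p3:
  fixes Y :: "'a::banach set"
  assumes "subspace Y" and "closed Y" and "Y \<noteq> {0}"
  shows "(property_HB Y \<longleftrightarrow>
            property_U Y \<and>
            (\<exists>P :: ('a \<Rightarrow>\<^sub>L real) \<Rightarrow> ('a \<Rightarrow>\<^sub>L real).
               linear_projection P \<and> range P = annihilator Y \<and>
               has_norm_one P \<and> has_norm_one (\<lambda>z. z - P z)))
       \<and> (property_HB Y \<longleftrightarrow>
            chebyshev (annihilator Y) \<and>
            linear_projection (metric_projection (annihilator Y)) \<and>
            has_norm_one (metric_projection (annihilator Y)))"
proof (rule conjI; rule iffI)
  assume "property_HB Y"
  then show "property_U Y \<and>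
            (\<exists>P :: ('a \<Rightarrow>\<^sub>L real) \<Rightarrow> ('a \<Rightarrow>\<^sub>L real).
               linear_projection P \<and> range P = annihilator Y \<and>
               has_norm_one P \<and> has_norm_one (\<lambda>z. z - P z))"
    by (rule HB_imp_B[OF assms(1) assms(3)])
next
  assume R: "property_U Y \<and>
            (\<exists>P :: ('a \<Rightarrow>\<^sub>L real) \<Rightarrow> ('a \<Rightarrow>\<^sub>L real).
               linear_projection P \<and> range P = annihilator Y \<and>
               has_norm_one P \<and> has_norm_one (\<lambda>z. z - P z))"
  then obtain P :: "('a \<Rightarrow>\<^sub>L real) \<Rightarrow> ('a \<Rightarrow>\<^sub>L real)" where
    "linear_projection P" "range P = annihilator Y" "has_norm_one P" "has_norm_one (\<lambda>z. z - P z)"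
    by blast
  then show "property_HB Y" using B_imp_HB[OF assms(1)] R by blast
next
  assume "property_HB Y"
  then show "chebyshev (annihilator Y) \<and>
            linear_projection (metric_projection (annihilator Y)) \<and>
            has_norm_one (metric_projection (annihilator Y))" by (rule HB_imp_C)
next
  assume "chebyshev (annihilator Y) \<and>
            linear_projection (metric_projection (annihilator Y)) \<and>
            has_norm_one (metric_projection (annihilator Y))"
  then show "property_HB Y" using C_imp_HB by blast
qed

end
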